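(* For all integers $2\le k\le n$, $$2kn+k\le \gamma_t(G_k\Box G_n)\le 2kn+2k.$$
   Context: For $m\ge 1$, $G_m$ is the graph with vertex set $\{a_1,\ldots,a_m\}\cup\{b_1,\ldots,b_m\}\cup\{c_1,\ldots,c_m\}$ in which $\{a_1,\ldots,a_m\}$ forms a clique, each $b_i$ is adjacent to $a_i$ and to $c_i$, and there are no other edges (i.e. $K_m$ with a path $P_3$ attached by an end-vertex at each clique vertex). $\gamma_t$ denotes the total domination number (minimum size of a set $S$ of vertices such that every vertex of the graph has a neighbor in $S$). $G\Box H$ is the Cartesian product: vertex set $V(G)\times V(H)$, with $(u_1,v_1)\sim(u_2,v_2)$ iff either $u_1=u_2$ and $v_1v_2\in E(H)$, or $v_1=v_2$ and $u_1u_2\in E(G)$. *)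

theory Defs
  imports Main
begin

datatype gvert = VA nat | VB nat | VC nat

text \<open>G_m: vertices a_i, b_i, c_i for i in {1..m}; the a_i form a clique, b_i ~ a_i, b_i ~ c_i.\<close>

definition G_verts :: "nat \<Rightarrow> gvert set" where
  "G_verts m = VA ` {1..m} \<union> VB ` {1..m} \<union> VC ` {1..m}"

fun G_edge :: "gvert \<Rightarrow> gvert \<Rightarrow> bool" where
  "G_edge (VA i) (VA j) = (i \<noteq> j)"
| "G_edge (VA i) (VB j) = (i = j)"
| "G_edge (VB i) (VA j) = (i = j)"
| "G_edge (VB i) (VC j) = (i = j)"
| "G_edge (VC i) (VB j) = (i = j)"
| "G_edge _ _ = False"

definition G_adj :: "nat \<Rightarrow> gvert \<Rightarrow> gvert \<Rightarrow> bool" where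
  "G_adj m u v = (u \<in> G_verts m \<and> v \<in> G_verts m \<and> G_edge u v)"

definition box_verts :: "'a set \<Rightarrow> 'b set \<Rightarrow> ('a \<times> 'b) set" where
  "box_verts V W = V \<times> W"

definition box_adj :: "('a \<Rightarrow> 'a \<Rightarrow> bool) \<Rightarrow> ('b \<Rightarrow> 'b \<Rightarrow> bool) \<Rightarrow> 'a \<times> 'b \<Rightarrow> 'a \<times> 'b \<Rightarrow> bool" where
  "box_adj E F p q = ((fst p = fst q \<and> F (snd p) (snd q)) \<or> (snd p = snd q \<and> E (fst p) (fst q)))"

definition is_tds :: "'a set \<Rightarrow> ('a \<Rightarrow> 'a \<Rightarrow> bool) \<Rightarrow> 'a set \<Rightarrow> bool" where
  "is_tds V E S = (S \<subseteq> V \<and> (\<forall>v\<in>V. \<exists>s\<in>S. E v s))"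

definition gamma_t :: "'a set \<Rightarrow> ('a \<Rightarrow> 'a \<Rightarrow> bool) \<Rightarrow> nat" where
  "gamma_t V E = (LEAST c. \<exists>S. is_tds V E S \<and> card S = c)"

end

theory Submission
  imports Defs
begin

lemma mem_G_verts[simp]:
  "VA i \<in> G_verts m \<longleftrightarrow> 1 \<le> i \<and> i \<le> m"
  "VB i \<in> G_verts m \<longleftrightarrow> 1 \<le> i \<and> i \<le> m"
  "VC i \<in> G_verts m \<longleftrightarrow> 1 \<le> i \<and> i \<le> m"
  by (auto simp: G_verts_def)

lemma finite_G_verts[simp]: "finite (G_verts m)"
  by (simp add: G_verts_def)

lemma edge_C: "G_edge (VC j) y \<longleftrightarrow> y = VB j" by (cases y) auto
lemma edge_B: "G_edge (VB j) y \<longleftrightarrow> y = VA j \<or> y = VC j" by (cases y) auto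
lemma edge_A: "G_edge (VA j) y \<longleftrightarrow> y = VB j \<or> (\<exists>j'. y = VA j' \<and> j' \<noteq> j)" by (cases y) auto

fun idx :: "gvert \<Rightarrow> nat" where
  "idx (VA i) = i" | "idx (VB i) = i" | "idx (VC i) = i"

lemma idx_range: "x \<in> G_verts m \<Longrightarrow> idx x \<in> {1..m}"
  by (cases x) auto

lemma card3: "finite T \<Longrightarrow> u \<in> T \<Longrightarrow> v \<in> T \<Longrightarrow> w \<in> T \<Longrightarrow> u \<noteq> v \<Longrightarrow> u \<noteq> w \<Longrightarrow> v \<noteq> w
  \<Longrightarrow> 3 \<le> card T"
proof -
  assume a: "finite T" "u \<in> T" "v \<in> T" "w \<in> T" "u \<noteq> v" "u \<noteq> w" "v \<noteq> w"
  have "card {u,v,w} = 3" using a by auto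
  moreover have "card {u,v,w} \<le> card T" using a by (intro card_mono) auto
  ultimately show ?thesis by simp
qed

lemma card2: "finite T \<Longrightarrow> u \<in> T \<Longrightarrow> v \<in> T \<Longrightarrow> u \<noteq> v \<Longrightarrow> 2 \<le> card T"
proof -
  assume a: "finite T" "u \<in> T" "v \<in> T" "u \<noteq> v"
  have "card {u,v} = 2" using a by auto
  moreover have "card {u,v} \<le> card T" using a by (intro card_mono) auto
  ultimately show ?thesis by simp
qed

lemma dom_nb:
  assumes "is_tds (box_verts (G_verts k) (G_verts n)) (box_adj (G_adj k) (G_adj n)) S"
    and "x \<in> G_verts k" "y \<in> G_verts n"
  shows "\<exists>x' y'. (x',y') \<in> S \<and> x' \<in> G_verts k \<and> y' \<in> G_verts n \<and>
     ((x' = x \<and> G_edge y y') \<or> (y' = y \<and> G_edge x x'))"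
proof -
  from assms obtain s where s: "s \<in> S" "box_adj (G_adj k) (G_adj n) (x,y) s"
    unfolding is_tds_def box_verts_def by blast
  moreover have "s \<in> G_verts k \<times> G_verts n" using s(1) assms(1) unfolding is_tds_def box_verts_def by blast
  ultimately show ?thesis
    by (cases s) (auto simp: box_adj_def G_adj_def)
qed

lemma row_sum:
  fixes f :: "nat \<Rightarrow> nat"
  assumes "finite A" "\<forall>x\<in>A. 2 \<le> f x" "a \<in> A" "3 \<le> f a"
  shows "2 * card A + 1 \<le> sum f A"
proof -
  have "sum f A = f a + sum f (A - {a})" using assms by (simp add: sum.remove)
  moreover have "card (A - {a}) * 2 \<le> sum f (A - {a})"
    using sum_bounded_below[of "A-{a}" 2 f] assms by auto
  moreover have "card (A - {a}) + 1 = card A" using assms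
    by (simp add: card_Diff_singleton card_gt_0_iff) (metis card_gt_0_iff empty_iff Suc_pred)
  ultimately show ?thesis using assms(4) by linarith
qed


definition S0 :: "nat \<Rightarrow> nat \<Rightarrow> (gvert \<times> gvert) set" where
  "S0 k n = (VB ` {1..k}) \<times> (VB ` ({1..n} - {2}) \<union> VC ` ({1..n} - {2}))
     \<union> (VA ` {1..k}) \<times> {VA 2, VC 2} \<union> (VC ` {1..k}) \<times> {VA 2, VB 2}"

lemma S0_tds:
  assumes "2 \<le> k" "2 \<le> n"
  shows "is_tds (box_verts (G_verts k) (G_verts n)) (box_adj (G_adj k) (G_adj n)) (S0 k n)"
proof -
  let ?D = "\<lambda>x y. \<exists>s\<in>S0 k n. box_adj (G_adj k) (G_adj n) (x, y) s"
  have h1: "?D (VA i) (VA j)" if "VA i \<in> G_verts k" "VA j \<in> G_verts n" for i j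
  proof (cases "j = 2")
    case True
    show ?thesis using that True assms
      by (intro bexI[where x="(VA (if i = 1 then 2 else 1), VA 2)"]) (auto simp: S0_def box_adj_def G_adj_def)
  next
    case False
    show ?thesis using that False assms
      by (intro bexI[where x="(VA i, VA 2)"]) (auto simp: S0_def box_adj_def G_adj_def)
  qed
  have h2: "?D (VA i) (VB j)" if "VA i \<in> G_verts k" "VB j \<in> G_verts n" for i j
  proof (cases "j = 2")
    case True
    show ?thesis using that True assms
      by (intro bexI[where x="(VA i, VA 2)"]) (auto simp: S0_def box_adj_def G_adj_def)
  next
    case False
    show ?thesis using that False assms
      by (intro bexI[where x="(VB i, VB j)"]) (auto simp: S0_def box_adj_def G_adj_def)
  qed
  have h3: "?D (VA i) (VC j)" if "VA i \<in> G_verts k" "VC j \<in> G_verts n" for i j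
  proof (cases "j = 2")
    case True
    show ?thesis using that True assms
      by (intro bexI[where x="(VA (if i = 1 then 2 else 1), VC 2)"]) (auto simp: S0_def box_adj_def G_adj_def)
  next
    case False
    show ?thesis using that False assms
      by (intro bexI[where x="(VB i, VC j)"]) (auto simp: S0_def box_adj_def G_adj_def)
  qed
  have h4: "?D (VB i) (VA j)" if "VB i \<in> G_verts k" "VA j \<in> G_verts n" for i j
  proof (cases "j = 2")
    case True
    show ?thesis using that True assms
      by (intro bexI[where x="(VA i, VA 2)"]) (auto simp: S0_def box_adj_def G_adj_def)
  next
    case False
    show ?thesis using that False assms
      by (intro bexI[where x="(VB i, VB j)"]) (auto simp: S0_def box_adj_def G_adj_def)
  qed
  have h5: "?D (VB i) (VB j)" if "VB i \<in> G_verts k" "VB j \<in> G_verts n" for i j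
  proof (cases "j = 2")
    case True
    show ?thesis using that True assms
      by (intro bexI[where x="(VC i, VB 2)"]) (auto simp: S0_def box_adj_def G_adj_def)
  next
    case False
    show ?thesis using that False assms
      by (intro bexI[where x="(VB i, VC j)"]) (auto simp: S0_def box_adj_def G_adj_def)
  qed
  have h6: "?D (VB i) (VC j)" if "VB i \<in> G_verts k" "VC j \<in> G_verts n" for i j
  proof (cases "j = 2")
    case True
    show ?thesis using that True assms
      by (intro bexI[where x="(VA i, VC 2)"]) (auto simp: S0_def box_adj_def G_adj_def)
  next
    case False
    show ?thesis using that False assms
      by (intro bexI[where x="(VB i, VB j)"]) (auto simp: S0_def box_adj_def G_adj_def)
  qed
  have h7: "?D (VC i) (VA j)" if "VC i \<in> G_verts k" "VA j \<in> G_verts n" for i j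
  proof (cases "j = 2")
    case True
    show ?thesis using that True assms
      by (intro bexI[where x="(VC i, VB 2)"]) (auto simp: S0_def box_adj_def G_adj_def)
  next
    case False
    show ?thesis using that False assms
      by (intro bexI[where x="(VC i, VA 2)"]) (auto simp: S0_def box_adj_def G_adj_def)
  qed
  have h8: "?D (VC i) (VB j)" if "VC i \<in> G_verts k" "VB j \<in> G_verts n" for i j
  proof (cases "j = 2")
    case True
    show ?thesis using that True assms
      by (intro bexI[where x="(VC i, VA 2)"]) (auto simp: S0_def box_adj_def G_adj_def)
  next
    case False
    show ?thesis using that False assms
      by (intro bexI[where x="(VB i, VB j)"]) (auto simp: S0_def box_adj_def G_adj_def)
  qed
  have h9: "?D (VC i) (VC j)" if "VC i \<in> G_verts k" "VC j \<in> G_verts n" for i j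
  proof (cases "j = 2")
    case True
    show ?thesis using that True assms
      by (intro bexI[where x="(VC i, VB 2)"]) (auto simp: S0_def box_adj_def G_adj_def)
  next
    case False
    show ?thesis using that False assms
      by (intro bexI[where x="(VB i, VC j)"]) (auto simp: S0_def box_adj_def G_adj_def)
  qed
  have all: "?D x y" if "x \<in> G_verts k" "y \<in> G_verts n" for x y
    using that h1 h2 h3 h4 h5 h6 h7 h8 h9 by (cases x; cases y) auto
  have sub: "S0 k n \<subseteq> G_verts k \<times> G_verts n"
    using assms by (auto simp: S0_def)
  show ?thesis unfolding is_tds_def box_verts_def using sub all by auto
qed

lemma S0_card:
  assumes "2 \<le> n"
  shows "card (S0 k n) \<le> 2*k*n + 2*k"
proof -
  have c1: "card (VB ` {1..k}) \<le> k" "card (VA ` {1..k}) \<le> k" "card (VC ` {1..k}) \<le> k"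
    by (rule card_image_le[THEN order_trans]; simp)+
  have c2: "card (VB ` ({1..n} - {2}) \<union> VC ` ({1..n} - {2})) \<le> 2 * (n - 1)"
  proof -
    have "card (VB ` ({1..n} - {2}) \<union> VC ` ({1..n} - {2})) \<le> card (VB ` ({1..n} - {2})) + card (VC ` ({1..n} - {2}))"
      by (rule card_Un_le)
    also have "\<dots> \<le> card ({1..n} - {2::nat}) + card ({1..n} - {2::nat})"
      by (intro add_mono card_image_le) auto
    also have "card ({1..n} - {2::nat}) = n - 1" using assms by (simp add: card_Diff_singleton)
    finally show ?thesis by simp
  qed
  have c3: "card {VA 2, VC 2} \<le> 2" "card {VA 2, VB 2} \<le> 2" by (auto simp: card_insert_if)
  have "card (S0 k n) \<le> card (VB ` {1..k} \<times> (VB ` ({1..n} - {2}) \<union> VC ` ({1..n} - {2})))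
      + card (VA ` {1..k} \<times> {VA 2, VC 2}) + card (VC ` {1..k} \<times> {VA 2, VB 2})"
    unfolding S0_def
    by (metis (no_types, lifting) card_Un_le add_mono order_trans order_refl)
  also have "\<dots> = card (VB ` {1..k}) * card (VB ` ({1..n} - {2}) \<union> VC ` ({1..n} - {2}))
      + card (VA ` {1..k}) * card {VA 2, VC 2} + card (VC ` {1..k}) * card {VA 2, VB 2}"
    by (simp only: card_cartesian_product)
  also have "\<dots> \<le> k * (2*(n - 1)) + k * 2 + k * 2"
    using c1 c2 c3 by (intro add_mono mult_mono) auto
  also have "k * (2*(n - 1)) + k * 2 + k * 2 = 2*k*n + 2*k"
    using assms by (cases n) (auto simp: algebra_simps)
  finally show ?thesis .
qed

context
  fixes k n :: nat and S :: "(gvert \<times> gvert) set"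
  assumes k2: "2 \<le> k" and kn: "k \<le> n"
    and tds: "is_tds (box_verts (G_verts k) (G_verts n)) (box_adj (G_adj k) (G_adj n)) S"
begin

lemma SV: "S \<subseteq> G_verts k \<times> G_verts n"
  using tds by (simp add: is_tds_def box_verts_def)

lemma finS: "finite S"
  using SV by (rule finite_subset) simp

definition T :: "nat \<Rightarrow> nat \<Rightarrow> (gvert \<times> gvert) set" where
  "T i j = {p \<in> S. idx (fst p) = i \<and> idx (snd p) = j}"

lemma finT: "finite (T i j)"
  unfolding T_def using finS by simp

lemma inT: "(x,y) \<in> S \<Longrightarrow> idx x = i \<Longrightarrow> idx y = j \<Longrightarrow> (x,y) \<in> T i j"
  unfolding T_def by simp

context
  fixes i j assumes ik: "1 \<le> i" "i \<le> k" and jn: "1 \<le> j" "j \<le> n"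
begin

lemma D_cc: "(VB i, VC j) \<in> S \<or> (VC i, VB j) \<in> S"
  using dom_nb[OF tds, of "VC i" "VC j"] ik jn by (auto simp: edge_C)

lemma D_bc: "(VA i, VC j) \<in> S \<or> (VC i, VC j) \<in> S \<or> (VB i, VB j) \<in> S"
  using dom_nb[OF tds, of "VB i" "VC j"] ik jn by (auto simp: edge_C edge_B)

lemma D_cb: "(VB i, VB j) \<in> S \<or> (VC i, VA j) \<in> S \<or> (VC i, VC j) \<in> S"
  using dom_nb[OF tds, of "VC i" "VB j"] ik jn by (auto simp: edge_C edge_B)

lemma D_ca: "(VB i, VA j) \<in> S \<or> (VC i, VB j) \<in> S \<or> (\<exists>j'\<in>{1..n}. (VC i, VA j') \<in> S)"
  using dom_nb[OF tds, of "VC i" "VA j"] ik jn by (auto simp: edge_C edge_B edge_A)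

lemma D_ac: "(VB i, VC j) \<in> S \<or> (VA i, VB j) \<in> S \<or> (\<exists>i'\<in>{1..k}. (VA i', VC j) \<in> S)"
  using dom_nb[OF tds, of "VA i" "VC j"] ik jn by (auto simp: edge_C edge_B edge_A)

lemma L1: "2 \<le> card (T i j)"
  using D_cc D_bc D_cb card2[OF finT] inT
  by (metis gvert.distinct gvert.inject idx.simps prod.inject)

lemma card3S: "(x3,y3) \<in> S \<Longrightarrow> (x1,y1) \<in> S \<Longrightarrow> (x2,y2) \<in> S \<Longrightarrow>
  idx x1 = i \<Longrightarrow> idx y1 = j \<Longrightarrow> idx x2 = i \<Longrightarrow> idx y2 = j \<Longrightarrow> idx x3 = i \<Longrightarrow> idx y3 = j \<Longrightarrow>
  (x1,y1) \<noteq> (x2,y2) \<Longrightarrow> (x1,y1) \<noteq> (x3,y3) \<Longrightarrow> (x2,y2) \<noteq> (x3,y3) \<Longrightarrow> 3 \<le> card (T i j)"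
  by (rule card3[where u="(x1,y1)" and v="(x2,y2)" and w="(x3,y3)", OF finT]) (auto intro: inT)

lemma L2: assumes ca: "(VC i, VA j) \<in> S" shows "3 \<le> card (T i j)"
proof -
  from D_cc show ?thesis
  proof
    assume bc: "(VB i, VC j) \<in> S"
    show ?thesis
      by (insert D_bc, elim disjE; (rule card3S[OF _ ca bc], assumption, simp_all))
  next
    assume cb: "(VC i, VB j) \<in> S"
    show ?thesis
      by (insert D_bc, elim disjE; (rule card3S[OF _ ca cb], assumption, simp_all))
  qed
qed

lemma L3: assumes ac: "(VA i, VC j) \<in> S" shows "3 \<le> card (T i j)"
proof -
  from D_cc show ?thesis
  proof
    assume bc: "(VB i, VC j) \<in> S"
    show ?thesis
      by (insert D_cb, elim disjE; (rule card3S[OF _ ac bc], assumption, simp_all))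
  next
    assume cb: "(VC i, VB j) \<in> S"
    show ?thesis
      by (insert D_cb, elim disjE; (rule card3S[OF _ ac cb], assumption, simp_all))
  qed
qed

lemma L4: "\<not> 3 \<le> card (T i j) \<Longrightarrow>
   (\<exists>j'\<in>{1..n}. (VC i, VA j') \<in> S) \<or> (\<exists>i'\<in>{1..k}. (VA i', VC j) \<in> S)"
proof (rule ccontr)
  assume c: "\<not> 3 \<le> card (T i j)"
    and n: "\<not> ((\<exists>j'\<in>{1..n}. (VC i, VA j') \<in> S) \<or> (\<exists>i'\<in>{1..k}. (VA i', VC j) \<in> S))"
  have ca: "(VB i, VA j) \<in> S \<or> (VC i, VB j) \<in> S" using D_ca n by blast
  have ac: "(VB i, VC j) \<in> S \<or> (VA i, VB j) \<in> S" using D_ac n by blast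
  have cb: "(VB i, VB j) \<in> S \<or> (VC i, VC j) \<in> S" using D_cb n ik jn by auto
  have bc: "(VB i, VB j) \<in> S \<or> (VC i, VC j) \<in> S" using D_bc n ik jn by auto
  have "3 \<le> card (T i j)"
    using ca
  proof
    assume x: "(VB i, VA j) \<in> S"
    from ac show ?thesis
    proof
      assume y: "(VB i, VC j) \<in> S"
      show ?thesis
        by (insert bc, elim disjE; (rule card3S[OF _ x y], assumption, simp_all))
    next
      assume y: "(VA i, VB j) \<in> S"
      show ?thesis
        by (insert D_cc, elim disjE; (rule card3S[OF _ x y], assumption, simp_all))
    qed
  next
    assume x: "(VC i, VB j) \<in> S"
    from ac show ?thesis
    proof
      assume y: "(VB i, VC j) \<in> S"
      show ?thesis
        by (insert bc, elim disjE; (rule card3S[OF _ x y], assumption, simp_all))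
    next
      assume y: "(VA i, VB j) \<in> S"
      show ?thesis
        by (insert cb, elim disjE; (rule card3S[OF _ x y], assumption, simp_all))
    qed
  qed
  with c show False by simp
qed

end

lemma Tset: "{x \<in> S. (idx (fst x), idx (snd x)) = y} = T (fst y) (snd y)"
  by (auto simp: T_def)

lemma card_S_sum: "card S = (\<Sum>i\<in>{1..k}. \<Sum>j\<in>{1..n}. card (T i j))"
proof -
  have "card S = sum (\<lambda>_. 1::nat) S" by (rule card_eq_sum)
  also have "\<dots> = (\<Sum>y\<in>{1..k}\<times>{1..n}. sum (\<lambda>_. 1::nat) {x \<in> S. (\<lambda>p. (idx (fst p), idx (snd p))) x = y})"
    by (rule sum.group[where g="\<lambda>p. (idx (fst p), idx (snd p))" and h="\<lambda>_. 1::nat", symmetric])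
       (use finS SV idx_range in force)+
  also have "\<dots> = (\<Sum>y\<in>{1..k}\<times>{1..n}. card (T (fst y) (snd y)))"
    by (simp only: Tset card_eq_sum)
  also have "\<dots> = (\<Sum>i\<in>{1..k}. \<Sum>j\<in>{1..n}. card (T i j))"
    by (simp add: sum.cartesian_product case_prod_beta')
  finally show ?thesis .
qed

lemma lower: "2*k*n + k \<le> card S"
proof (cases "\<forall>i\<in>{1..k}. \<exists>j\<in>{1..n}. 3 \<le> card (T i j)")
  case True
  have "\<forall>i\<in>{1..k}. 2*n+1 \<le> (\<Sum>j\<in>{1..n}. card (T i j))"
  proof
    fix i assume i: "i \<in> {1..k}"
    then obtain j where "j\<in>{1..n}" "3 \<le> card (T i j)" using True by blast
    then show "2*n+1 \<le> (\<Sum>j\<in>{1..n}. card (T i j))"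
      using row_sum[of "{1..n}" "\<lambda>j. card (T i j)" j] L1 i by auto
  qed
  hence "k * (2*n+1) \<le> (\<Sum>i\<in>{1..k}. \<Sum>j\<in>{1..n}. card (T i j))"
    using sum_bounded_below[of "{1..k}" "2*n+1" "\<lambda>i. \<Sum>j\<in>{1..n}. card (T i j)"] by auto
  thus ?thesis using card_S_sum by (simp add: algebra_simps)
next
  case False
  then obtain i0 where i0: "i0\<in>{1..k}" "\<forall>j\<in>{1..n}. \<not> 3 \<le> card (T i0 j)" by blast
  have "\<forall>j\<in>{1..n}. 2*k+1 \<le> (\<Sum>i\<in>{1..k}. card (T i j))"
  proof
    fix j assume j: "j\<in>{1..n}"
    have "\<exists>i\<in>{1..k}. 3 \<le> card (T i j)"
    proof -
      have "\<not> 3 \<le> card (T i0 j)" using i0 j by blast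
      with L4[of i0 j] i0 j consider (a) "\<exists>j'\<in>{1..n}. (VC i0, VA j')\<in>S"
        | (b) "\<exists>i'\<in>{1..k}. (VA i', VC j)\<in>S" by auto
      then show ?thesis
      proof cases
        case a
        then obtain j' where j': "j'\<in>{1..n}" "(VC i0, VA j')\<in>S" by blast
        with L2[of i0 j'] i0 have "3 \<le> card (T i0 j')" by auto
        with i0 j' show ?thesis by auto
      next
        case b
        then obtain i' where i': "i'\<in>{1..k}" "(VA i', VC j)\<in>S" by blast
        with L3[of i' j] j have "3 \<le> card (T i' j)" by auto
        with i' show ?thesis by auto
      qed
    qed
    then obtain i where "i\<in>{1..k}" "3 \<le> card (T i j)" by blast
    then show "2*k+1 \<le> (\<Sum>i\<in>{1..k}. card (T i j))"
      using row_sum[of "{1..k}" "\<lambda>i. card (T i j)" i] L1 j by auto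
  qed
  hence "n * (2*k+1) \<le> (\<Sum>j\<in>{1..n}. \<Sum>i\<in>{1..k}. card (T i j))"
    using sum_bounded_below[of "{1..n}" "2*k+1" "\<lambda>j. \<Sum>i\<in>{1..k}. card (T i j)"] by auto
  moreover have "(\<Sum>j\<in>{1..n}. \<Sum>i\<in>{1..k}. card (T i j)) = card S"
    using sum.swap[of "\<lambda>i j. card (T i j)" "{1..n}" "{1..k}"] card_S_sum by simp
  ultimately have "n * (2*k+1) \<le> card S" by simp
  moreover have "2*k*n + k \<le> n * (2*k+1)" using kn by (simp add: algebra_simps)
  ultimately show ?thesis by linarith
qed

end


theorem proposition5:
  fixes k n :: nat
  assumes "2 \<le> k" and "k \<le> n"
  shows "2*k*n + k \<le> gamma_t (box_verts (G_verts k) (G_verts n)) (box_adj (G_adj k) (G_adj n))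
       \<and> gamma_t (box_verts (G_verts k) (G_verts n)) (box_adj (G_adj k) (G_adj n)) \<le> 2*k*n + 2*k"
proof -
  let ?V = "box_verts (G_verts k) (G_verts n)" and ?E = "box_adj (G_adj k) (G_adj n)"
  have n2: "2 \<le> n" using assms by simp
  have t0: "is_tds ?V ?E (S0 k n)" using S0_tds[OF assms(1) n2] .
  have ex: "\<exists>c S. is_tds ?V ?E S \<and> card S = c" using t0 by blast
  have up: "gamma_t ?V ?E \<le> card (S0 k n)"
    unfolding gamma_t_def by (rule Least_le) (use t0 in blast)
  obtain S where S: "is_tds ?V ?E S" "card S = gamma_t ?V ?E"
    using LeastI_ex[OF ex] unfolding gamma_t_def by blast
  have "2*k*n + k \<le> card S" using lower[OF assms S(1)] .
  with S(2) up S0_card[OF n2, where k=k] show ?thesis by simp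
qed

end
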